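(* Let $d\geq 2$. Suppose a finite bipartite graph $G$ with vertex classes $A$ and $B$ satisfies $|A|\geq d^6|B|$, $d_G(x,y)\leq d$ for all distinct $x,y\in B$, and $d_G(v)\leq d$ for every $v\in A$. Then $G$ contains a subgraph $G'$ which is $C_4$-free and has average degree at least $d(G)/5$.
   Context: $d(G)=2e(G)/|V(G)|$ is the average degree, $d_G(v)$ the degree of $v$, and the codegree $d_G(x,y)$ is the number of common neighbours of $x$ and $y$. A graph is $C_4$-free if it contains no $4$-cycle as a subgraph. *)

theory Defs
  imports Complex_Main
begin

definition graph :: "'a set \<Rightarrow> 'a set set \<Rightarrow> bool" where
  "graph V E \<longleftrightarrow> finite V \<and> (\<forall>e\<in>E. \<exists>x y. x \<noteq> y \<and> e = {x, y} \<and> x \<in> V \<and> y \<in> V)"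

definition nbrs :: "'a set set \<Rightarrow> 'a \<Rightarrow> 'a set" where
  "nbrs E v = {u. {v, u} \<in> E}"

definition degree :: "'a set set \<Rightarrow> 'a \<Rightarrow> nat" where
  "degree E v = card (nbrs E v)"

definition codegree :: "'a set set \<Rightarrow> 'a \<Rightarrow> 'a \<Rightarrow> nat" where
  "codegree E x y = card (nbrs E x \<inter> nbrs E y)"

text \<open>Average degree d(G) = 2 e(G) / |V(G)| (equal to 0 for the empty graph).\<close>
definition avg_degree :: "'a set \<Rightarrow> 'a set set \<Rightarrow> real" where
  "avg_degree V E = 2 * real (card E) / real (card V)"

definition bipartite_with :: "'a set \<Rightarrow> 'a set set \<Rightarrow> 'a set \<Rightarrow> 'a set \<Rightarrow> bool" where
  "bipartite_with V E A B \<longleftrightarrow> A \<inter> B = {} \<and> A \<union> B = V \<and>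
     (\<forall>e\<in>E. \<exists>a\<in>A. \<exists>b\<in>B. e = {a, b})"

definition subgraph :: "'a set \<Rightarrow> 'a set set \<Rightarrow> 'a set \<Rightarrow> 'a set set \<Rightarrow> bool" where
  "subgraph V' E' V E \<longleftrightarrow> graph V' E' \<and> V' \<subseteq> V \<and> E' \<subseteq> E"

definition C4_free :: "'a set set \<Rightarrow> bool" where
  "C4_free E \<longleftrightarrow> \<not> (\<exists>a b c d. distinct [a, b, c, d] \<and>
      {a, b} \<in> E \<and> {b, c} \<in> E \<and> {c, d} \<in> E \<and> {d, a} \<in> E)"

end

theory Submission
  imports Defs
begin

lemma greedy_indep:
  fixes w :: "'a \<Rightarrow> real" and R :: "'a \<Rightarrow> 'a \<Rightarrow> bool" and D :: nat
  assumes "finite X" "\<forall>x\<in>X. 0 \<le> w x" "\<forall>x\<in>X. card {y\<in>X. y = x \<or> R x y} \<le> D"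
    "\<forall>x y. R x y \<longrightarrow> R y x"
  shows "\<exists>S\<subseteq>X. (\<forall>a\<in>S. \<forall>b\<in>S. a \<noteq> b \<longrightarrow> \<not> R a b) \<and> sum w X \<le> real D * sum w S"
  using assms
proof (induction X rule: finite_psubset_induct)
  case (psubset X)
  show ?case
  proof (cases "X = {}")
    case True then show ?thesis by auto
  next
    case False
    have "Max (w ` X) \<in> w ` X" using Max_in[of "w ` X"] False psubset.hyps by auto
    then obtain a where aX: "a \<in> X" and aw: "w a = Max (w ` X)" by auto
    have amax: "\<forall>x\<in>X. w x \<le> w a" using aw psubset.hyps by auto
    define K where "K = {y\<in>X. y = a \<or> R a y}"
    define Y where "Y = X - K"
    have aK: "a \<in> K" using aX K_def by auto
    have KX: "K \<subseteq> X" using K_def by auto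
    have YX: "Y \<subset> X" using aK aX Y_def by auto
    have finY: "finite Y" using YX psubset.hyps finite_subset by auto
    have "\<forall>x\<in>Y. card {y\<in>Y. y = x \<or> R x y} \<le> D"
    proof
      fix x assume "x \<in> Y"
      then have "x \<in> X" using YX by auto
      have "card {y\<in>Y. y = x \<or> R x y} \<le> card {y\<in>X. y = x \<or> R x y}"
        by (rule card_mono) (use psubset.hyps YX in auto)
      then show "card {y\<in>Y. y = x \<or> R x y} \<le> D" using psubset.prems(2) \<open>x \<in> X\<close> by auto
    qed
    then obtain S' where S'Y: "S' \<subseteq> Y" and S'ind: "\<forall>a\<in>S'. \<forall>b\<in>S'. a \<noteq> b \<longrightarrow> \<not> R a b"
      and S'w: "sum w Y \<le> real D * sum w S'"
      using psubset.IH[OF YX] psubset.prems YX by blast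
    have aS': "a \<notin> S'" using S'Y aK Y_def by auto
    have ind: "\<forall>x\<in>insert a S'. \<forall>y\<in>insert a S'. x \<noteq> y \<longrightarrow> \<not> R x y"
    proof -
      have "\<forall>b\<in>S'. \<not> R a b" using S'Y Y_def K_def by auto
      then show ?thesis using S'ind psubset.prems(3) by blast
    qed
    have finK: "finite K" using KX psubset.hyps finite_subset by auto
    have "sum w X = sum w K + sum w Y"
      using sum.subset_diff[OF KX psubset.hyps] Y_def by (simp add: add.commute)
    moreover have "sum w K \<le> real (card K) * w a"
      using sum_bounded_above[of K w "w a"] amax KX by auto
    moreover have "real (card K) * w a \<le> real D * w a"
    proof -
      have "card K \<le> D" using psubset.prems(2) aX K_def by auto
      then show ?thesis using psubset.prems(1) aX by (simp add: mult_right_mono)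
    qed
    moreover have "sum w (insert a S') = w a + sum w S'"
      using aS' finite_subset[OF S'Y finY] by simp
    ultimately have "sum w X \<le> real D * sum w (insert a S')"
      using S'w by (simp add: distrib_left)
    moreover have "insert a S' \<subseteq> X" using aX S'Y YX by auto
    ultimately show ?thesis using ind by blast
  qed
qed

theorem lemma12:
  fixes V A B :: "'a set" and E :: "'a set set" and d :: nat
  assumes "d \<ge> 2"
    and "graph V E"
    and "bipartite_with V E A B"
    and "card A \<ge> d ^ 6 * card B"
    and "\<And>x y. x \<in> B \<Longrightarrow> y \<in> B \<Longrightarrow> x \<noteq> y \<Longrightarrow> codegree E x y \<le> d"
    and "\<And>v. v \<in> A \<Longrightarrow> degree E v \<le> d"
  shows "\<exists>V' E'. subgraph V' E' V E \<and> C4_free E' \<and> avg_degree V' E' \<ge> avg_degree V E / 5"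
proof -
  have AB: "A \<inter> B = {}" and ABV: "A \<union> B = V" and Eab: "\<forall>e\<in>E. \<exists>a\<in>A. \<exists>b\<in>B. e = {a, b}"
    using assms(3) unfolding bipartite_with_def by auto
  have finV: "finite V" and Ev: "\<forall>e\<in>E. \<exists>x y. x \<noteq> y \<and> e = {x, y} \<and> x \<in> V \<and> y \<in> V"
    using assms(2) unfolding graph_def by auto
  have finA: "finite A" and finB: "finite B" using finV ABV by auto
  have NA: "nbrs E a \<subseteq> B" if "a \<in> A" for a
  proof
    fix u assume "u \<in> nbrs E a"
    then have "{a, u} \<in> E" by (simp add: nbrs_def)
    then obtain a' b where "a' \<in> A" "b \<in> B" "{a, u} = {a', b}" using Eab by blast
    then show "u \<in> B" using that AB by (auto simp: doubleton_eq_iff)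
  qed
  have NV: "nbrs E v \<subseteq> V" for v
  proof
    fix u assume "u \<in> nbrs E v"
    then have "{v, u} \<in> E" by (simp add: nbrs_def)
    then obtain x y where "x \<noteq> y" "{v, u} = {x, y}" "x \<in> V" "y \<in> V" using Ev by blast
    then show "u \<in> V" by (auto simp: doubleton_eq_iff)
  qed
  have finN: "finite (nbrs E v)" for v using NV finV finite_subset by blast
  have nsym: "u \<in> nbrs E v \<longleftrightarrow> v \<in> nbrs E u" for u v
    by (simp add: nbrs_def insert_commute)
  define F where "F S = (\<Union>a\<in>S. (\<lambda>b. {a, b}) ` nbrs E a)" for S
  have cardF: "card (F S) = (\<Sum>a\<in>S. degree E a)" if SA: "S \<subseteq> A" for S
  proof -
    have finS: "finite S" using SA finA finite_subset by blast
    have "card (F S) = (\<Sum>a\<in>S. card ((\<lambda>b. {a, b}) ` nbrs E a))"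
      unfolding F_def
    proof (rule card_UN_disjoint[OF finS])
      show "\<forall>i\<in>S. finite ((\<lambda>b. {i, b}) ` nbrs E i)" using finN by auto
      show "\<forall>i\<in>S. \<forall>j\<in>S. i \<noteq> j \<longrightarrow> (\<lambda>b. {i, b}) ` nbrs E i \<inter> (\<lambda>b. {j, b}) ` nbrs E j = {}"
      proof (intro ballI impI)
        fix i j assume ij: "i \<in> S" "j \<in> S" "i \<noteq> j"
        show "(\<lambda>b. {i, b}) ` nbrs E i \<inter> (\<lambda>b. {j, b}) ` nbrs E j = {}"
        proof (rule ccontr)
          assume "(\<lambda>b. {i, b}) ` nbrs E i \<inter> (\<lambda>b. {j, b}) ` nbrs E j \<noteq> {}"
          then obtain b b' where bb: "b \<in> nbrs E i" "b' \<in> nbrs E j" "{i, b} = {j, b'}" by auto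
          have "b' \<in> B" using bb NA ij SA by auto
          moreover have "i = b'" using bb ij by (auto simp: doubleton_eq_iff)
          ultimately show False using ij SA AB by auto
        qed
      qed
    qed
    also have "\<dots> = (\<Sum>a\<in>S. degree E a)"
    proof (rule sum.cong[OF refl])
      fix a assume "a \<in> S"
      have "inj_on (\<lambda>b. {a, b}) (nbrs E a)" by (auto simp: inj_on_def doubleton_eq_iff)
      then show "card ((\<lambda>b. {a, b}) ` nbrs E a) = degree E a"
        by (simp add: card_image degree_def)
    qed
    finally show ?thesis .
  qed
  have EF: "E = F A"
  proof
    show "E \<subseteq> F A"
    proof
      fix e assume "e \<in> E"
      then obtain a b where "a \<in> A" "b \<in> B" "e = {a, b}" using Eab by blast
      then show "e \<in> F A" using \<open>e \<in> E\<close> unfolding F_def nbrs_def by auto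
    qed
    show "F A \<subseteq> E" unfolding F_def nbrs_def by auto
  qed
  have FE: "F S \<subseteq> E" for S unfolding F_def nbrs_def by auto
  have memF: "(x \<in> S \<and> y \<in> nbrs E x) \<or> (y \<in> S \<and> x \<in> nbrs E y)" if "{x, y} \<in> F S" for S x y
    using that unfolding F_def by (auto simp: doubleton_eq_iff)
  show ?thesis
  proof (cases "E = {}")
    case True
    have "subgraph {} {} V E" unfolding subgraph_def graph_def by auto
    moreover have "C4_free {}" unfolding C4_free_def by auto
    moreover have "avg_degree V E / 5 \<le> avg_degree {} {}" using True by (simp add: avg_degree_def)
    ultimately show ?thesis by blast
  next
    case False
    then have "B \<noteq> {}" using Eab by blast
    then have mpos: "card B > 0" using finB by auto
    define n where "n = real (card A)"
    define m where "m = real (card B)"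
    define e where "e = real (card E)"
    define c where "c = e / (5 * (n + m))"
    define w where "w a = real (degree E a) - c" for a
    define conf where "conf a a' = (\<exists>x y. x \<noteq> y \<and> x \<in> nbrs E a \<inter> nbrs E a' \<and> y \<in> nbrs E a \<inter> nbrs E a')" for a a'
    define X where "X = {a\<in>A. 0 \<le> w a}"
    have XA: "X \<subseteq> A" using X_def by auto
    have finX: "finite X" using XA finA finite_subset by blast
    have Kb: "\<forall>x\<in>X. card {y\<in>X. y = x \<or> conf x y} \<le> d^3 + 1"
    proof
      fix x assume "x \<in> X"
      then have xA: "x \<in> A" using XA by auto
      define P where "P = {p. fst p \<in> nbrs E x \<and> snd p \<in> nbrs E x \<and> fst p \<noteq> snd p}"
      define U where "U = (\<Union>p\<in>P. nbrs E (fst p) \<inter> nbrs E (snd p))"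
      have PN: "P \<subseteq> nbrs E x \<times> nbrs E x" using P_def by auto
      have finP: "finite P" using PN finN finite_subset by blast
      have "card P \<le> card (nbrs E x \<times> nbrs E x)" using PN finN by (intro card_mono) auto
      also have "\<dots> = degree E x * degree E x" by (simp add: card_cartesian_product degree_def)
      also have "\<dots> \<le> d * d" using assms(6)[OF xA] by (simp add: mult_mono)
      finally have cP: "card P \<le> d * d" .
      have "card U \<le> (\<Sum>p\<in>P. card (nbrs E (fst p) \<inter> nbrs E (snd p)))"
        unfolding U_def by (rule card_UN_le[OF finP])
      also have "\<dots> \<le> (\<Sum>p\<in>P. d)"
      proof (rule sum_mono)
        fix p assume "p \<in> P"
        then have "fst p \<in> B" "snd p \<in> B" "fst p \<noteq> snd p" using P_def NA[OF xA] by auto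
        then show "card (nbrs E (fst p) \<inter> nbrs E (snd p)) \<le> d"
          using assms(5) by (simp add: codegree_def)
      qed
      also have "\<dots> = card P * d" by simp
      also have "\<dots> \<le> d * d * d" using cP by simp
      finally have cU: "card U \<le> d ^ 3" by (simp add: power3_eq_cube)
      have finU: "finite U" unfolding U_def using finP finN by auto
      have "{y\<in>X. y = x \<or> conf x y} \<subseteq> insert x U"
      proof
        fix y assume "y \<in> {y\<in>X. y = x \<or> conf x y}"
        then have "y = x \<or> conf x y" by auto
        then show "y \<in> insert x U"
        proof
          assume "conf x y"
          then obtain u v where "u \<noteq> v" "u \<in> nbrs E x \<inter> nbrs E y" "v \<in> nbrs E x \<inter> nbrs E y"
            unfolding conf_def by blast
          then have "(u, v) \<in> P" "y \<in> nbrs E u \<inter> nbrs E v" using P_def nsym by auto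
          then show ?thesis unfolding U_def by force
        qed auto
      qed
      then have "card {y\<in>X. y = x \<or> conf x y} \<le> card (insert x U)"
        using finU by (intro card_mono) auto
      also have "\<dots> \<le> card U + 1" using finU by (simp add: card_insert_if)
      finally show "card {y\<in>X. y = x \<or> conf x y} \<le> d^3 + 1" using cU by simp
    qed
    have csym: "\<forall>x y. conf x y \<longrightarrow> conf y x" unfolding conf_def by blast
    obtain S where SX: "S \<subseteq> X" and Sind: "\<forall>a\<in>S. \<forall>b\<in>S. a \<noteq> b \<longrightarrow> \<not> conf a b"
      and Sw: "sum w X \<le> real (d^3 + 1) * sum w S"
      using greedy_indep[OF finX _ Kb csym, of w] X_def by auto
    have SA: "S \<subseteq> A" using SX XA by auto
    have finS: "finite S" using SA finA finite_subset by blast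
    have "sum w A = sum w X + sum w (A - X)"
      using sum.subset_diff[OF XA finA] by (simp add: add.commute)
    moreover have "sum w (A - X) \<le> 0" using X_def by (intro sum_nonpos) auto
    ultimately have wAX: "sum w A \<le> sum w X" by simp
    have "sum w A = (\<Sum>a\<in>A. real (degree E a)) - c * n"
      unfolding w_def n_def by (simp add: sum_subtractf)
    also have "(\<Sum>a\<in>A. real (degree E a)) = e"
      unfolding e_def using cardF[of A] EF by (simp flip: of_nat_sum)
    finally have wA: "sum w A = e - c * n" .
    have m0: "m > 0" using mpos m_def by simp
    have n0: "n \<ge> 0" using n_def by simp
    have e0: "e \<ge> 0" using e_def by simp
    have c0: "c \<ge> 0" using c_def e0 n0 m0 by simp
    have d1: "real d \<ge> 1" using assms(1) by simp
    have nd: "n \<ge> real d ^ 6 * m"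
    proof -
      have "real (d ^ 6 * card B) \<le> real (card A)" using assms(4) by linarith
      then show ?thesis unfolding n_def m_def by simp
    qed
    have d36: "real d ^ 3 \<le> real d ^ 6" using d1 by (intro power_increasing) auto
    have "c * n \<le> e / 5"
    proof -
      have "c * n = e * n / (5 * (n + m))" unfolding c_def by simp
      also have "\<dots> \<le> e * (n + m) / (5 * (n + m))"
        using e0 m0 n0 by (intro divide_right_mono mult_left_mono) auto
      also have "\<dots> = e / 5" using m0 n0 by (simp add: field_simps)
      finally show ?thesis .
    qed
    then have A1: "4 * e / 5 \<le> real (d^3 + 1) * sum w S" using wA wAX Sw by linarith
    have A2: "real (d^3 + 1) * (c * m) \<le> 4 * e / 5"
    proof -
      have "(real d ^ 3 + 1) * m \<le> 4 * (n + m)"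
      proof -
        have "0 \<le> real d ^ 6" by simp
        then have "real d ^ 3 + 1 \<le> 4 * real d ^ 6 + 4" using d36 by linarith
        then have "(real d ^ 3 + 1) * m \<le> (4 * real d ^ 6 + 4) * m"
          using m0 by (intro mult_right_mono) auto
        also have "\<dots> \<le> 4 * (n + m)" using nd by (simp add: algebra_simps)
        finally show ?thesis .
      qed
      then have "e * ((real d ^ 3 + 1) * m) \<le> e * (4 * (n + m))"
        using e0 by (simp add: mult_left_mono)
      then have "(real d ^ 3 + 1) * (e * m) / (5 * (n + m)) \<le> e * (4 * (n + m)) / (5 * (n + m))"
        using m0 n0 by (simp add: divide_right_mono algebra_simps)
      also have "\<dots> = 4 * e / 5" using m0 n0 by (simp add: field_simps)
      finally show ?thesis unfolding c_def by (simp add: add.commute)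
    qed
    have "real (d^3 + 1) * (c * m) \<le> real (d^3 + 1) * sum w S" using A1 A2 by linarith
    then have wS: "c * m \<le> sum w S" by (rule mult_left_le_imp_le) (rule of_nat_0_less_iff[THEN iffD2], simp)
    have dS: "(\<Sum>a\<in>S. real (degree E a)) = sum w S + c * real (card S)"
      unfolding w_def by (simp add: sum_subtractf)
    define V' where "V' = S \<union> B"
    define E' where "E' = F S"
    have cV': "card V' = card S + card B"
      unfolding V'_def using finS finB SA AB by (intro card_Un_disjoint) auto
    have cV: "card V = card A + card B" using ABV AB finA finB card_Un_disjoint by fastforce
    have cE': "real (card E') = (\<Sum>a\<in>S. real (degree E a))"
      unfolding E'_def using cardF[OF SA] by simp
    have sumpos: "real (card S) + m > 0" using m0 by simp
    have "avg_degree V E / 5 = 2 * c"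
      unfolding avg_degree_def c_def cV e_def n_def m_def by simp
    also have "\<dots> \<le> avg_degree V' E'"
    proof -
      have "c * (real (card S) + m) \<le> real (card E')" using cE' dS wS by (simp add: algebra_simps)
      then have "2 * c * (real (card S) + m) \<le> 2 * real (card E')" by simp
      then show ?thesis unfolding avg_degree_def cV' m_def
        using sumpos m_def by (simp add: pos_le_divide_eq)
    qed
    finally have avg: "avg_degree V E / 5 \<le> avg_degree V' E'" .
    have sub: "subgraph V' E' V E"
      unfolding subgraph_def
    proof (intro conjI)
      show "V' \<subseteq> V" unfolding V'_def using SA ABV by auto
      show "E' \<subseteq> E" unfolding E'_def using FE by auto
      show "graph V' E'" unfolding graph_def
      proof (intro conjI ballI)
        show "finite V'" unfolding V'_def using finS finB by auto
        fix e' assume "e' \<in> E'"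
        then obtain a b where ab: "a \<in> S" "b \<in> nbrs E a" "e' = {a, b}" unfolding E'_def F_def by auto
        then have "b \<in> B" "a \<in> A" using NA SA by auto
        then have "a \<noteq> b" using AB by auto
        then show "\<exists>x y. x \<noteq> y \<and> e' = {x, y} \<and> x \<in> V' \<and> y \<in> V'"
          using ab \<open>b \<in> B\<close> unfolding V'_def by auto
      qed
    qed
    have SB: "x \<in> S \<Longrightarrow> y \<in> nbrs E x \<Longrightarrow> y \<in> B \<and> y \<notin> S" for x y using SA NA AB by blast
    have c4: "C4_free E'"
      unfolding C4_free_def
    proof
      assume "\<exists>p q r s. distinct [p, q, r, s] \<and> {p, q} \<in> E' \<and> {q, r} \<in> E' \<and> {r, s} \<in> E' \<and> {s, p} \<in> E'"
      then obtain p q r s where ds: "distinct [p, q, r, s]" and e1: "{p, q} \<in> F S"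
        and e2: "{q, r} \<in> F S" and e3: "{r, s} \<in> F S" and e4: "{s, p} \<in> F S"
        unfolding E'_def by blast
      note m1 = memF[OF e1] and m2 = memF[OF e2] and m3 = memF[OF e3] and m4 = memF[OF e4]
      show False
      proof (cases "p \<in> S")
        case True
        have "q \<in> nbrs E p" "q \<notin> S" using m1 SB True by blast+
        then have "r \<in> S" "q \<in> nbrs E r" using m2 by auto
        then have "s \<in> nbrs E r" "s \<notin> S" using m3 SB by blast+
        then have "s \<in> nbrs E p" using m4 by auto
        then have "conf p r" unfolding conf_def
          using \<open>q \<in> nbrs E p\<close> \<open>q \<in> nbrs E r\<close> \<open>s \<in> nbrs E r\<close> ds by auto
        then show False using Sind True \<open>r \<in> S\<close> ds by auto
      next
        case False
        have "q \<in> S" "p \<in> nbrs E q" using m1 False by auto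
        have "s \<in> S" "p \<in> nbrs E s" using m4 False by auto
        have "r \<in> nbrs E q" using m2 SB \<open>q \<in> S\<close> by blast
        have "r \<in> nbrs E s" using m3 SB \<open>s \<in> S\<close> by blast
        have "conf q s" unfolding conf_def
          using \<open>p \<in> nbrs E q\<close> \<open>p \<in> nbrs E s\<close> \<open>r \<in> nbrs E q\<close> \<open>r \<in> nbrs E s\<close> ds by auto
        then show False using Sind \<open>q \<in> S\<close> \<open>s \<in> S\<close> ds by auto
      qed
    qed
    show ?thesis using sub c4 avg by blast
  qed
qed

end
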